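(* Let $K$ be a field of characteristic $0$, $d\geq 2$ an integer, $m$ an integer with $\gcd(m,d)=1$, $r:=m/d$, and $E\geq 2$ an integer. Let $V_{r,E}(x):=\sum_{k=0}^{E-1}\binom{r}{k}x^k\in K[x]$, where $\binom{r}{k}=\frac{r(r-1)\cdots(r-k+1)}{k!}$. Suppose $m>d(E-1)$. Then the polynomial $F(x)=(1+x)^m-V_{r,E}(x)^d$ has degree $m$, has no nonzero repeated roots (in an algebraic closure of $K$), and has $0$ as a root of multiplicity exactly $E$. Equivalently, $f(x):=F(x)/x^E$ is a polynomial of positive degree $m-E$ without repeated roots and with nonzero constant term. *)

theory Defs
  imports "HOL-Computational_Algebra.Polynomial"
begin

definition is_field_hom :: "('a::field \<Rightarrow> 'b::field) \<Rightarrow> bool" where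
  "is_field_hom \<phi> \<longleftrightarrow> \<phi> 0 = 0 \<and> \<phi> 1 = 1 \<and>
     (\<forall>x y. \<phi> (x + y) = \<phi> x + \<phi> y) \<and> (\<forall>x y. \<phi> (x * y) = \<phi> x * \<phi> y)"

definition V_poly :: "'a::field_char_0 \<Rightarrow> nat \<Rightarrow> 'a poly" where
  "V_poly r E = (\<Sum>k<E. monom (r gchoose k) k)"

end

theory Submission
  imports Defs
begin

lemma fh0: "is_field_hom \<phi> \<Longrightarrow> \<phi> 0 = 0" by (simp add: is_field_hom_def)
lemma fh1: "is_field_hom \<phi> \<Longrightarrow> \<phi> 1 = 1" by (simp add: is_field_hom_def)
lemma fh_add: "is_field_hom \<phi> \<Longrightarrow> \<phi> (x + y) = \<phi> x + \<phi> y" by (simp add: is_field_hom_def)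
lemma fh_mult: "is_field_hom \<phi> \<Longrightarrow> \<phi> (x * y) = \<phi> x * \<phi> y" by (simp add: is_field_hom_def)
lemma fh_uminus: assumes "is_field_hom \<phi>" shows "\<phi> (- x) = - \<phi> x"
proof -
  have "\<phi> (x + - x) = 0" using fh0[OF assms] by simp
  then show ?thesis using fh_add[OF assms, of x "-x"] by (simp add: add_eq_0_iff)
qed
lemma fh_diff: assumes "is_field_hom \<phi>" shows "\<phi> (x - y) = \<phi> x - \<phi> y"
  using fh_add[OF assms, of x "-y"] fh_uminus[OF assms, of y] by simp
lemma fh_of_nat: assumes "is_field_hom \<phi>" shows "\<phi> (of_nat n) = of_nat n"
  by (induction n) (simp_all add: fh0[OF assms] fh1[OF assms] fh_add[OF assms])
lemma fh_sum: assumes "is_field_hom \<phi>" shows "\<phi> (sum g A) = (\<Sum>x\<in>A. \<phi> (g x))"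
  by (induction A rule: infinite_finite_induct) (simp_all add: fh0[OF assms] fh_add[OF assms])
lemma fh_power: assumes "is_field_hom \<phi>" shows "\<phi> (x ^ n) = \<phi> x ^ n"
  by (induction n) (simp_all add: fh1[OF assms] fh_mult[OF assms])
lemma fh_nz: assumes "is_field_hom \<phi>" "x \<noteq> 0" shows "\<phi> x \<noteq> 0"
proof
  assume "\<phi> x = 0"
  then have "\<phi> (x * inverse x) = 0" using fh_mult[OF assms(1)] by simp
  then show False using assms fh1[OF assms(1)] by simp
qed

lemma mp_add: assumes "is_field_hom \<phi>"
  shows "map_poly \<phi> (p + q) = map_poly \<phi> p + map_poly \<phi> q"
  by (intro poly_eqI) (simp add: coeff_map_poly fh0[OF assms] fh_add[OF assms])
lemma mp_diff: assumes "is_field_hom \<phi>"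
  shows "map_poly \<phi> (p - q) = map_poly \<phi> p - map_poly \<phi> q"
  by (intro poly_eqI) (simp add: coeff_map_poly fh0[OF assms] fh_diff[OF assms])
lemma mp_mult: assumes "is_field_hom \<phi>"
  shows "map_poly \<phi> (p * q) = map_poly \<phi> p * map_poly \<phi> q"
  by (intro poly_eqI) (simp add: coeff_map_poly coeff_mult fh0[OF assms] fh_sum[OF assms] fh_mult[OF assms])
lemma mp_one: assumes "is_field_hom \<phi>" shows "map_poly \<phi> 1 = 1"
  using fh1[OF assms] by simp
lemma mp_power: assumes "is_field_hom \<phi>"
  shows "map_poly \<phi> (p ^ n) = map_poly \<phi> p ^ n"
  by (induction n) (simp_all add: mp_one[OF assms] mp_mult[OF assms])
lemma mp_pderiv: assumes "is_field_hom \<phi>"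
  shows "map_poly \<phi> (pderiv p) = pderiv (map_poly \<phi> p)"
  by (intro poly_eqI) (simp add: coeff_map_poly coeff_pderiv fh0[OF assms] fh_mult[OF assms] fh_of_nat[OF assms] fh_add[OF assms] fh1[OF assms])
lemma mp_smult: assumes "is_field_hom \<phi>"
  shows "map_poly \<phi> (smult c p) = smult (\<phi> c) (map_poly \<phi> p)"
  by (rule map_poly_smult) (simp_all add: fh0[OF assms] fh_mult[OF assms])
lemma mp_monom: assumes "is_field_hom \<phi>"
  shows "map_poly \<phi> (monom c n) = monom (\<phi> c) n"
  by (rule map_poly_monom) (simp add: fh0[OF assms])
lemma mp_X1: assumes "is_field_hom \<phi>"
  shows "map_poly \<phi> [:1, 1:] = [:1, 1:]"
  by (simp add: map_poly_pCons fh0[OF assms] fh1[OF assms])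
lemma mp_eq0: assumes "is_field_hom \<phi>"
  shows "map_poly \<phi> p = 0 \<longleftrightarrow> p = 0"
  by (rule map_poly_eq_0_iff) (simp_all add: fh0[OF assms] fh_nz[OF assms])

lemma order_ge2_pderiv:
  fixes P :: "'b::field poly"
  assumes "order z P \<ge> 2"
  shows "poly (pderiv P) z = 0"
proof -
  have "[:-z,1:]^2 dvd [:-z,1:] ^ order z P" using assms by (rule le_imp_power_dvd)
  then have "[:-z,1:]^2 dvd P" using order_1 dvd_trans by blast
  then obtain Q where Q: "P = [:-z,1:]^2 * Q" by (elim dvdE)
  have "poly (pderiv ([:-z,1:]^2 * Q)) z = poly ([:-z,1:]^2) z * poly (pderiv Q) z + poly Q z * poly (pderiv ([:-z,1:]^2)) z"
    by (simp only: pderiv_mult poly_add poly_mult)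
  also have "\<dots> = 0" by (simp add: pderiv_power)
  finally show ?thesis unfolding Q .
qed


lemma coeff_V: "coeff (V_poly r E) k = (if k < E then r gchoose k else 0)"
  by (simp add: V_poly_def coeff_sum coeff_monom)

lemma gbin_rec: "of_nat (Suc k) * (a gchoose Suc k) = (a - of_nat k) * (a gchoose k :: 'a::field_char_0)"
proof -
  have "fact (Suc k) * (a gchoose Suc k) = (\<Prod>i = 0..<Suc k. a - of_nat i)"
    by (rule gbinomial_mult_fact)
  also have "\<dots> = (a - of_nat k) * (\<Prod>i = 0..<k. a - of_nat i)" by simp
  also have "\<dots> = (a - of_nat k) * (fact k * (a gchoose k))" by (simp add: gbinomial_mult_fact)
  finally have "fact k * (of_nat (Suc k) * (a gchoose Suc k)) = fact k * ((a - of_nat k) * (a gchoose k))"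
    by (simp add: algebra_simps)
  then show ?thesis by simp
qed

lemma gbin_nz: assumes "\<And>j. (a::'a::field_char_0) \<noteq> of_nat j" shows "a gchoose k \<noteq> 0"
  using assms by (auto simp: gbinomial_pochhammer pochhammer_eq_0_iff)

lemma coeff_X1_mult: "coeff ([:1, 1:] * (p::'a::comm_ring_1 poly)) j = coeff p j + (if j = 0 then 0 else coeff p (j - 1))"
  by (cases j) (simp_all add: coeff_pCons)

lemma I1:
  fixes r :: "'a::field_char_0"
  assumes "E \<ge> 2"
  shows "[:1, 1:] * pderiv (V_poly r E) = smult r (V_poly r E) + monom ((of_nat (E - 1) - r) * (r gchoose (E - 1))) (E - 1)"
proof (rule poly_eqI)
  fix j
  show "coeff ([:1, 1:] * pderiv (V_poly r E)) j = coeff (smult r (V_poly r E) + monom ((of_nat (E - 1) - r) * (r gchoose (E - 1))) (E - 1)) j"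
  proof (cases j)
    case 0
    then show ?thesis using assms by (simp add: coeff_X1_mult coeff_pderiv coeff_V coeff_monom)
  next
    case (Suc i)
    consider "Suc (Suc i) < E" | "Suc (Suc i) = E" | "Suc (Suc i) > E" by linarith
    then show ?thesis
    proof cases
      case 1
      then show ?thesis using Suc gbin_rec[of "Suc i" r]
        by (auto simp add: coeff_X1_mult coeff_pderiv coeff_V coeff_monom algebra_simps)
    next
      case 2
      then show ?thesis using Suc
        by (auto simp add: coeff_X1_mult coeff_pderiv coeff_V coeff_monom algebra_simps)
    next
      case 3
      then show ?thesis using Suc
        by (auto simp add: coeff_X1_mult coeff_pderiv coeff_V coeff_monom algebra_simps)
    qed
  qed
qed


theorem theorem7p1:
  fixes d m E :: nat
  assumes "d \<ge> 2" and "coprime m d" and "E \<ge> 2"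
    and "m > d * (E - 1)"
  defines "r \<equiv> (of_nat m / of_nat d :: 'a::field_char_0)"
  defines "F \<equiv> [:1, 1:] ^ m - (V_poly r E) ^ d"
  defines "f \<equiv> F div [:0, 1:] ^ E"
  shows "degree F = m
       \<and> order 0 F = E
       \<and> (\<forall>\<phi> :: 'a \<Rightarrow> 'b::alg_closed_field. is_field_hom \<phi> \<longrightarrow>
            (\<forall>z. z \<noteq> 0 \<and> poly (map_poly \<phi> F) z = 0 \<longrightarrow> order z (map_poly \<phi> F) = 1))
       \<and> degree f = m - E \<and> m - E > 0 \<and> coeff f 0 \<noteq> 0
       \<and> F = [:0, 1:] ^ E * f
       \<and> (\<forall>\<phi> :: 'a \<Rightarrow> 'b::alg_closed_field. is_field_hom \<phi> \<longrightarrow>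
            (\<forall>z. poly (map_poly \<phi> f) z = 0 \<longrightarrow> order z (map_poly \<phi> f) = 1))"
proof -
  let ?X = "[:1, 1:] :: 'a poly"
  define V where "V = V_poly r E"
  define b where "b = (of_nat (E - 1) - r) * (r gchoose (E - 1))"
  have FV: "F = ?X ^ m - V ^ d" by (simp add: F_def V_def)
  have d0: "d > 0" using assms(1) by simp
  have "2 * (E - 1) \<le> d * (E - 1)" using assms(1) by (rule mult_le_mono1)
  then have mE: "m > E" using assms(3,4) by linarith
  have rnat: "r \<noteq> of_nat j" for j
  proof
    assume "r = of_nat j"
    then have "(of_nat m :: 'a) = of_nat j * of_nat d" using d0 unfolding r_def by (simp add: divide_eq_eq)
    then have "m = j * d" by (metis of_nat_eq_iff of_nat_mult)
    then have "d dvd m" by simp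
    then have "is_unit d" using coprime_common_divisor[of m d d] assms(2) by simp
    then show False using assms(1) by simp
  qed
  have bnz: "b \<noteq> 0" unfolding b_def using rnat gbin_nz[of r] by (metis eq_iff_diff_eq_0 mult_eq_0_iff)
  have I1': "?X * pderiv V = smult r V + monom b (E - 1)" using I1[OF assms(3)] by (simp add: V_def b_def)
  have dr: "of_nat d * r = of_nat m" using d0 by (simp add: r_def)
  have J: "?X * pderiv F = smult (of_nat m) F - smult (of_nat d * b) (V ^ (d - 1) * monom 1 (E - 1))"
  proof -
    obtain m' where m': "m = Suc m'" using mE by (cases m) auto
    obtain d' where d': "d = Suc d'" using d0 by (cases d) auto
    have pX: "pderiv ?X = 1" by (simp add: pderiv_pCons)
    have A: "?X * pderiv (?X ^ m) = smult (of_nat m) (?X ^ m)"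
      unfolding m' pderiv_power_Suc pX by (simp only: mult_1_right mult_smult_right power_Suc)
    have "?X * pderiv (V ^ d) = smult (of_nat d) (V ^ d') * (?X * pderiv V)"
      unfolding d' pderiv_power_Suc by (rule mult.left_commute)
    also have "\<dots> = smult (of_nat d) (V ^ d') * (smult r V + smult b (monom 1 (E - 1)))"
      by (simp only: I1' smult_monom mult_1_right)
    also have "\<dots> = smult (of_nat d * r) (V ^ d' * V) + smult (of_nat d * b) (V ^ d' * monom 1 (E - 1))"
      by (simp only: distrib_left mult_smult_left mult_smult_right smult_smult mult.commute)
    also have "\<dots> = smult (of_nat m) (V ^ d) + smult (of_nat d * b) (V ^ (d - 1) * monom 1 (E - 1))"
      by (simp only: dr[unfolded d'] d' power_Suc2[symmetric] diff_Suc_1)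
    finally have B: "?X * pderiv (V ^ d) = \<dots>" .
    show ?thesis unfolding FV pderiv_diff right_diff_distrib A B by (simp only: smult_diff_right diff_diff_eq)
  qed
  have cF: "coeff (?X * pderiv F) j = of_nat (Suc j) * coeff F (Suc j) + of_nat j * coeff F j" for j
    by (cases j) (simp_all add: coeff_X1_mult coeff_pderiv)
  have cW: "coeff (V ^ (d - 1) * monom 1 (E - 1)) j = (if j < E - 1 then 0 else coeff (V ^ (d - 1)) (j - (E - 1)))" for j
    by (simp add: mult.commute[of _ "monom _ _"] coeff_monom_mult)
  have V0: "poly V 0 = 1" using assms(3) by (simp add: poly_0_coeff_0 V_def coeff_V)
  have Vk0: "coeff (V ^ k) 0 = 1" for k by (simp add: poly_0_coeff_0[symmetric] V0)
  have F0: "coeff F 0 = 0" by (simp add: poly_0_coeff_0[symmetric] FV V0)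
  have FJ: "coeff (?X * pderiv F) j = of_nat m * coeff F j - of_nat d * b * coeff (V ^ (d - 1) * monom 1 (E - 1)) j" for j
    by (subst J) (simp only: coeff_diff coeff_smult)
  have Fj: "j < E \<Longrightarrow> coeff F j = 0" for j
  proof (induction j)
    case 0 then show ?case using F0 by simp
  next
    case (Suc j)
    have j1: "j < E - 1" using Suc.prems by simp
    have "coeff F j = 0" using Suc by simp
    then have "of_nat (Suc j) * coeff F (Suc j) = 0" using FJ[of j] cF[of j] cW[of j] j1 by simp
    moreover have "(of_nat (Suc j) :: 'a) \<noteq> 0" by (simp only: of_nat_eq_0_iff)
    ultimately show ?case by simp
  qed
  have "of_nat E * coeff F E = - (of_nat d * b)"
    using FJ[of "E - 1"] cF[of "E - 1"] cW[of "E - 1"] Fj[of "E - 1"] assms(3) Vk0[of "d - 1"]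
    by (simp add: Suc_diff_1)
  then have FEnz: "coeff F E \<noteq> 0" using bnz d0 by auto
  have degV: "degree V \<le> E - 1" by (rule degree_le) (auto simp: V_def coeff_V)
  have "degree (V ^ d) \<le> d * degree V" using degree_power_le[of V d] by (simp add: mult.commute)
  also have "\<dots> \<le> d * (E - 1)" using degV by simp
  finally have degVd: "degree (V ^ d) < m" using assms(4) by linarith
  have degX: "degree (?X ^ m) = m" using degree_linear_power[of "1::'a" m] by simp
  have degF: "degree F = m" unfolding FV diff_conv_add_uminus
    by (subst degree_add_eq_left) (simp_all add: degX degVd)
  have Fnz: "F \<noteq> 0" using degF mE by auto
  have xE: "[:0, 1:] ^ E = (monom 1 E :: 'a poly)" by (simp add: monom_altdef)
  have "monom 1 E dvd F" using Fj by (simp add: monom_1_dvd_iff')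
  then have FfE: "F = monom 1 E * f" unfolding f_def xE by simp
  have cf0: "coeff f 0 = coeff F E" by (subst FfE) (simp add: coeff_monom_mult)
  have fnz: "f \<noteq> 0" using cf0 FEnz by auto
  have "degree F = E + degree f" by (subst FfE) (simp add: degree_mult_eq fnz degree_monom_eq)
  then have degf: "degree f = m - E" using degF by simp
  have pf0: "poly f 0 \<noteq> 0" using cf0 FEnz by (simp add: poly_0_coeff_0)
  have ordX: "order 0 (monom 1 E :: 'a poly) = E" using order_power_n_n[of "0::'a" E] by (simp add: xE[symmetric])
  have ordF: "order 0 F = E"
    using order_mult[of "monom 1 E" f 0] FfE Fnz ordX pf0 by (simp add: order_root)
  have part3: "\<forall>z. z \<noteq> 0 \<and> poly (map_poly \<phi> F) z = 0 \<longrightarrow> order z (map_poly \<phi> F) = 1"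
    if hom: "is_field_hom \<phi>" for \<phi> :: "'a \<Rightarrow> 'b::alg_closed_field"
  proof (intro allI impI)
    fix z assume z: "z \<noteq> 0 \<and> poly (map_poly \<phi> F) z = 0"
    let ?F = "map_poly \<phi> F" and ?V = "map_poly \<phi> V"
    have psiF: "?F = [:1, 1:] ^ m - ?V ^ d" by (simp add: FV mp_diff[OF hom] mp_power[OF hom] mp_X1[OF hom])
    have psiJ: "[:1, 1:] * pderiv ?F = smult (\<phi> (of_nat m)) ?F - smult (\<phi> (of_nat d * b)) (?V ^ (d - 1) * monom 1 (E - 1))"
      using arg_cong[OF J, of "map_poly \<phi>"]
      by (simp only: mp_diff[OF hom] mp_mult[OF hom] mp_power[OF hom] mp_X1[OF hom] mp_pderiv[OF hom]
          mp_smult[OF hom] mp_monom[OF hom] fh1[OF hom])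
    have psiI: "[:1, 1:] * pderiv ?V = smult (\<phi> r) ?V + monom (\<phi> b) (E - 1)"
      using arg_cong[OF I1', of "map_poly \<phi>"]
      by (simp only: mp_add[OF hom] mp_mult[OF hom] mp_X1[OF hom] mp_pderiv[OF hom]
          mp_smult[OF hom] mp_monom[OF hom])
    have Fnz': "?F \<noteq> 0" using Fnz mp_eq0[OF hom] by simp
    have "order z ?F \<noteq> 0" using z Fnz' order_root by blast
    show "order z ?F = 1"
    proof (rule ccontr)
      assume "order z ?F \<noteq> 1"
      with \<open>order z ?F \<noteq> 0\<close> have "order z ?F \<ge> 2" by linarith
      then have "poly (pderiv ?F) z = 0" by (rule order_ge2_pderiv)
      with arg_cong[OF psiJ, of "\<lambda>p. poly p z"] z
      have "\<phi> (of_nat d * b) * (poly ?V z ^ (d - 1) * z ^ (E - 1)) = 0" by (simp add: poly_monom)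
      moreover have "\<phi> (of_nat d * b) \<noteq> 0" using fh_nz[OF hom] bnz d0 by simp
      ultimately have "poly ?V z = 0" using z by simp
      with z psiF d0 have "(1 + z) ^ m = 0" by simp
      then have "z = -1" by (simp add: add_eq_0_iff)
      with arg_cong[OF psiI, of "\<lambda>p. poly p z"] \<open>poly ?V z = 0\<close>
      have "\<phi> b * (-1) ^ (E - 1) = 0" by (simp add: poly_monom)
      then show False using fh_nz[OF hom] bnz by simp
    qed
  qed
  have part8: "\<forall>z. poly (map_poly \<phi> f) z = 0 \<longrightarrow> order z (map_poly \<phi> f) = 1"
    if hom: "is_field_hom \<phi>" for \<phi> :: "'a \<Rightarrow> 'b::alg_closed_field"
  proof (intro allI impI)
    fix z assume z: "poly (map_poly \<phi> f) z = 0"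
    have psiF: "map_poly \<phi> F = monom 1 E * map_poly \<phi> f"
      by (subst FfE) (simp add: mp_mult[OF hom] mp_monom[OF hom] fh1[OF hom])
    have "poly (map_poly \<phi> f) 0 = \<phi> (coeff f 0)" by (simp add: poly_0_coeff_0 coeff_map_poly fh0[OF hom])
    then have z0: "z \<noteq> 0" using z fh_nz[OF hom] cf0 FEnz by auto
    have fnz': "map_poly \<phi> f \<noteq> 0" using fnz mp_eq0[OF hom] by simp
    have ordm: "order z (monom 1 E :: 'b poly) = 0" using order_root[of "monom 1 E" z] z0 by (simp add: poly_monom)
    have "order z (map_poly \<phi> F) = order z (map_poly \<phi> f)"
      unfolding psiF using fnz' ordm by (subst order_mult) simp_all
    moreover have "order z (map_poly \<phi> F) = 1" using part3[OF hom] z0 z psiF by (simp add: poly_monom)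
    ultimately show "order z (map_poly \<phi> f) = 1" by simp
  qed
  show ?thesis using degF ordF part3 degf mE cf0 FEnz FfE xE part8 by simp
qed

end
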